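(* Let $e\ge2$, $\mathfrak{g}=\widehat{\mathfrak{sl}}_e$, $\Lambda$ a dominant integral weight, and $\mathcal{C}$ a categorical module over $\mathfrak{g}$ whose support equals the support of $V(\Lambda)$. Let $\mu=\Lambda-\sum_{r=1}^e b_r\alpha_r$ be a dominant weight in the support, and for distinct $i,j$ define $b_{ij}=\min(\{b_r-1\}_{r\in[i,j-1]}\cup\{b_r\}_{r\notin[i,j-1]})$ if $i<j$, and $b_{ij}=\min(\{b_r+1\}_{r\in[j,i-1]}\cup\{b_r\}_{r\notin[j,i-1]})$ if $j<i$. Then $k^+_{ij}\le b_{ij}$, with equality if $\mu+\alpha_{ij;n}$ is dominant for all $i,j,n$.
   Context: For $\widehat{\mathfrak{sl}}_e$: simple roots $\alpha_r=\epsilon_r-\epsilon_{r+1}$ for $1\le r\le e-1$ and $\alpha_e=\epsilon_e-\epsilon_1+\delta$, $\delta=\alpha_1+\dots+\alpha_e$. The positive real roots are $\alpha_{ij;n}=\epsilon_i-\epsilon_j+n\delta$ for distinct $i,j\in\{1,\dots,e\}$ with $n\ge0$ if $i<j$ and $n\ge1$ if $i>j$. A categorical module is a representation of the Khovanov–Lauda–Rouquier 2-category (abelian categories $\mathcal{C}_\lambda$ with exact functors $\mathcal{E}_i,\mathcal{F}_i$ shifting weight by $\pm\alpha_i$, etc.); its support is $\{\lambda:\mathcal{C}_\lambda\neq0\}$. $N_\mu=\{\alpha\text{ positive real root}:\mathcal{C}_{\mu+\alpha}\neq0\}$; for $i<j$, $k^+_{ij}=\max(\{-1\}\cup\{n:\alpha_{ij;n}\in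 N_\mu\})$, and for $i>j$, $k^+_{ij}=\max(\{0\}\cup\{n:\alpha_{ij;n}\in N_\mu\})$. $[a,b]$ denotes the integer interval. *)

theory Defs
  imports Main
begin

text \<open>Weights of the form Lambda - sum_r b_r alpha_r (r = 1..e) are encoded by the
coefficient function b :: nat => int (normalised to 0 outside 1..e).
The dominant integral weight Lambda is encoded by Lam i = <Lambda, h_i>, i = 1..e.\<close>

definition cartan :: "nat \<Rightarrow> nat \<Rightarrow> nat \<Rightarrow> int" where
  "cartan e i j =
     (if i = j then 2
      else if e = 2 then -2
      else if j = i + 1 \<or> i = j + 1 \<or> (i = 1 \<and> j = e) \<or> (i = e \<and> j = 1) then -1
      else 0)"

definition pairing :: "nat \<Rightarrow> (nat \<Rightarrow> int) \<Rightarrow> (nat \<Rightarrow> int) \<Rightarrow> nat \<Rightarrow> int" where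
  "pairing e Lam b i = Lam i - (\<Sum>r\<in>{1..e}. cartan e i r * b r)"

definition dominant :: "nat \<Rightarrow> (nat \<Rightarrow> int) \<Rightarrow> (nat \<Rightarrow> int) \<Rightarrow> bool" where
  "dominant e Lam b \<longleftrightarrow> (\<forall>i\<in>{1..e}. pairing e Lam b i \<ge> 0)"

text \<open>simple reflection s_i(lambda) = lambda - <lambda,h_i> alpha_i\<close>
definition srefl :: "nat \<Rightarrow> (nat \<Rightarrow> int) \<Rightarrow> nat \<Rightarrow> (nat \<Rightarrow> int) \<Rightarrow> (nat \<Rightarrow> int)" where
  "srefl e Lam i b = b(i := b i + pairing e Lam b i)"

text \<open>Support (set of weights) of V(Lambda): the Weyl group orbits of the dominant
weights mu \<le> Lambda (Kac, Infinite dimensional Lie algebras, Prop. 11.2 / 12.5).\<close>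
inductive_set Vsupp :: "nat \<Rightarrow> (nat \<Rightarrow> int) \<Rightarrow> (nat \<Rightarrow> int) set" for e Lam where
  base: "\<lbrakk>\<forall>r\<in>{1..e}. b r \<ge> 0; \<forall>r. r \<notin> {1..e} \<longrightarrow> b r = 0; dominant e Lam b\<rbrakk>
           \<Longrightarrow> b \<in> Vsupp e Lam"
| refl: "\<lbrakk>b \<in> Vsupp e Lam; i \<in> {1..e}\<rbrakk> \<Longrightarrow> srefl e Lam i b \<in> Vsupp e Lam"

text \<open>positive real roots alpha_{ij;n} = eps_i - eps_j + n delta\<close>
definition pos_real_root :: "nat \<Rightarrow> nat \<Rightarrow> nat \<Rightarrow> int \<Rightarrow> bool" where
  "pos_real_root e i j n \<longleftrightarrow> i \<in> {1..e} \<and> j \<in> {1..e} \<and> i \<noteq> j \<and>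
     (if i < j then n \<ge> 0 else n \<ge> 1)"

text \<open>coefficient of alpha_r in alpha_{ij;n}\<close>
definition root_coeff :: "nat \<Rightarrow> nat \<Rightarrow> nat \<Rightarrow> int \<Rightarrow> nat \<Rightarrow> int" where
  "root_coeff e i j n r =
     (if r \<notin> {1..e} then 0
      else if i < j then n + (if r \<in> {i..j-1} then 1 else 0)
      else n - (if r \<in> {j..i-1} then 1 else 0))"

text \<open>mu + alpha_{ij;n}, with mu = Lambda - sum b_r alpha_r\<close>
definition shift :: "nat \<Rightarrow> (nat \<Rightarrow> int) \<Rightarrow> nat \<Rightarrow> nat \<Rightarrow> int \<Rightarrow> (nat \<Rightarrow> int)" where
  "shift e b i j n = (\<lambda>r. b r - root_coeff e i j n r)"

definition kplus :: "(nat \<Rightarrow> int) set \<Rightarrow> nat \<Rightarrow> (nat \<Rightarrow> int) \<Rightarrow> nat \<Rightarrow> nat \<Rightarrow> int" where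
  "kplus S e b i j =
     Max ({if i < j then -1 else 0} \<union> {n. pos_real_root e i j n \<and> shift e b i j n \<in> S})"

definition bij :: "nat \<Rightarrow> (nat \<Rightarrow> int) \<Rightarrow> nat \<Rightarrow> nat \<Rightarrow> int" where
  "bij e b i j =
     (if i < j then Min ((\<lambda>r. b r - 1) ` {i..j-1} \<union> b ` ({1..e} - {i..j-1}))
      else Min ((\<lambda>r. b r + 1) ` {j..i-1} \<union> b ` ({1..e} - {j..i-1})))"

end

theory Submission
  imports Defs "HOL-Library.Multiset"
begin

definition nx :: "nat \<Rightarrow> nat \<Rightarrow> nat" where "nx e i = (if i = e then 1 else i + 1)"
definition pv :: "nat \<Rightarrow> nat \<Rightarrow> nat" where "pv e i = (if i = 1 then e else i - 1)"

lemma nx_in: "e \<ge> 2 \<Longrightarrow> i \<in> {1..e} \<Longrightarrow> nx e i \<in> {1..e}" by (auto simp: nx_def)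
lemma pv_in: "e \<ge> 2 \<Longrightarrow> i \<in> {1..e} \<Longrightarrow> pv e i \<in> {1..e}" by (auto simp: pv_def)
lemma pv_nx: "e \<ge> 2 \<Longrightarrow> i \<in> {1..e} \<Longrightarrow> pv e (nx e i) = i" by (auto simp: pv_def nx_def)
lemma nx_pv: "e \<ge> 2 \<Longrightarrow> i \<in> {1..e} \<Longrightarrow> nx e (pv e i) = i" by (auto simp: pv_def nx_def)
lemma nx_neq: "e \<ge> 2 \<Longrightarrow> i \<in> {1..e} \<Longrightarrow> nx e i \<noteq> i" by (auto simp: nx_def)
lemma pv_neq: "e \<ge> 2 \<Longrightarrow> i \<in> {1..e} \<Longrightarrow> pv e i \<noteq> i" by (auto simp: pv_def)

lemma bij_pv: "e \<ge> 2 \<Longrightarrow> bij_betw (pv e) {1..e} {1..e}"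
  apply (rule bij_betw_byWitness[where f'="nx e"])
  using pv_nx nx_pv pv_in nx_in by auto

lemma sum_pv: "e \<ge> 2 \<Longrightarrow> (\<Sum>r\<in>{1..e}. f (pv e r)) = (\<Sum>r\<in>{1..e}. f r)"
  using sum.reindex_bij_betw[OF bij_pv, of e f] by simp

lemma cartan_sum:
  assumes e: "e \<ge> 2" and i: "i \<in> {1..e}"
  shows "(\<Sum>r\<in>{1..e}. cartan e i r * b r) = 2 * b i - b (pv e i) - b (nx e i)"
proof (cases "e = 2")
  case True
  have "(\<Sum>r\<in>{1..e}. cartan e i r * b r) = (\<Sum>r\<in>{1..2}. cartan 2 i r * b r)" using True by simp
  also have "... = cartan 2 i 1 * b 1 + cartan 2 i 2 * b 2" by (simp add: numeral_2_eq_2)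
  moreover have "i = 1 \<or> i = 2" using True i by auto
  ultimately show ?thesis using True by (auto simp: cartan_def pv_def nx_def numeral_2_eq_2)
next
  case False
  hence e3: "e \<ge> 3" using e by auto
  have d: "pv e i \<noteq> nx e i" using e3 i by (auto simp: pv_def nx_def)
  have "(\<Sum>r\<in>{1..e}. cartan e i r * b r) = (\<Sum>r\<in>{i, pv e i, nx e i}. cartan e i r * b r)"
  proof (rule sum.mono_neutral_right)
    show "{i, pv e i, nx e i} \<subseteq> {1..e}" using pv_in nx_in e i by auto
    show "\<forall>r\<in>{1..e} - {i, pv e i, nx e i}. cartan e i r * b r = 0"
      using e3 i by (auto simp: cartan_def pv_def nx_def)
  qed simp
  also have "... = cartan e i i * b i + cartan e i (pv e i) * b (pv e i) + cartan e i (nx e i) * b (nx e i)"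
    using d pv_neq[OF e i] nx_neq[OF e i] by (simp add: algebra_simps)
  also have "... = 2 * b i - b (pv e i) - b (nx e i)"
    using e3 i False by (auto simp: cartan_def pv_def nx_def)
  finally show ?thesis .
qed

lemma pairing_eq: "e \<ge> 2 \<Longrightarrow> i \<in> {1..e} \<Longrightarrow>
  pairing e Lam b i = Lam i - 2 * b i + b (pv e i) + b (nx e i)"
  unfolding pairing_def using cartan_sum by simp

definition kk :: "nat \<Rightarrow> (nat \<Rightarrow> int) \<Rightarrow> int" where "kk e Lam = (\<Sum>r\<in>{1..e}. Lam r)"
definition PP :: "nat \<Rightarrow> (nat \<Rightarrow> int) \<Rightarrow> nat \<Rightarrow> int" where "PP e Lam r = (\<Sum>s\<in>{r..<e}. Lam s)"
definition yv :: "nat \<Rightarrow> (nat \<Rightarrow> int) \<Rightarrow> (nat \<Rightarrow> int) \<Rightarrow> nat \<Rightarrow> int" where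
  "yv e Lam b r = PP e Lam r - b r + b (pv e r)"
definition QQ :: "nat \<Rightarrow> (nat \<Rightarrow> int) \<Rightarrow> int" where
  "QQ e b = (\<Sum>r\<in>{1..e}. (b r - b (pv e r))^2)"
definition LB :: "nat \<Rightarrow> (nat \<Rightarrow> int) \<Rightarrow> (nat \<Rightarrow> int) \<Rightarrow> int" where
  "LB e Lam b = (\<Sum>r\<in>{1..e}. Lam r * b r)"
definition FF :: "nat \<Rightarrow> (nat \<Rightarrow> int) \<Rightarrow> (nat \<Rightarrow> int) \<Rightarrow> int" where
  "FF e Lam b = 2 * LB e Lam b - QQ e b"
definition res :: "nat \<Rightarrow> (nat \<Rightarrow> int) \<Rightarrow> (nat \<Rightarrow> int) \<Rightarrow> int multiset" where
  "res e Lam b = image_mset (\<lambda>r. yv e Lam b r mod kk e Lam) (mset_set {1..e})"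

lemma PP_step: "i < e \<Longrightarrow> PP e Lam i = Lam i + PP e Lam (i+1)"
  unfolding PP_def by (simp add: sum.atLeast_Suc_lessThan)

lemma PP_e: "PP e Lam e = 0" unfolding PP_def by simp

lemma PP_1: "e \<ge> 1 \<Longrightarrow> PP e Lam 1 = kk e Lam - Lam e"
proof -
  assume "e \<ge> 1"
  hence "{1..e} = insert e {1..<e}" by auto
  thus ?thesis unfolding PP_def kk_def by simp
qed

lemma pairing_y1: "e \<ge> 2 \<Longrightarrow> 1 \<le> i \<Longrightarrow> i < e \<Longrightarrow>
  pairing e Lam b i = yv e Lam b i - yv e Lam b (i+1)"
  using pairing_eq[of e i Lam b] PP_step[of i e Lam]
  by (auto simp: yv_def pv_def nx_def)

lemma pairing_ye: "e \<ge> 2 \<Longrightarrow>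
  pairing e Lam b e = kk e Lam + yv e Lam b e - yv e Lam b 1"
  using pairing_eq[of e e Lam b] PP_1[of e Lam] PP_e[of e Lam]
  by (auto simp: yv_def pv_def nx_def)

lemma sum_two_change:
  fixes g g' :: "'a \<Rightarrow> int"
  assumes "finite A" "a \<in> A" "c \<in> A" "a \<noteq> c" "\<And>r. r \<in> A \<Longrightarrow> r \<noteq> a \<Longrightarrow> r \<noteq> c \<Longrightarrow> g' r = g r"
  shows "sum g' A = sum g A + (g' a - g a) + (g' c - g c)"
proof -
  have "sum g' A = g' a + g' c + sum g' (A - {a} - {c})"
    using assms by (simp add: sum.remove[of A a] sum.remove[of "A - {a}" c] algebra_simps)
  moreover have "sum g A = g a + g c + sum g (A - {a} - {c})"
    using assms by (simp add: sum.remove[of A a] sum.remove[of "A - {a}" c] algebra_simps)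
  moreover have "sum g' (A - {a} - {c}) = sum g (A - {a} - {c})"
    using assms by (intro sum.cong) auto
  ultimately show ?thesis by (simp add: algebra_simps)
qed

lemma sum_one_change:
  fixes g g' :: "'a \<Rightarrow> int"
  assumes "finite A" "a \<in> A" "\<And>r. r \<in> A \<Longrightarrow> r \<noteq> a \<Longrightarrow> g' r = g r"
  shows "sum g' A = sum g A + (g' a - g a)"
proof -
  have "sum g' A = g' a + sum g' (A - {a})"
    using assms by (simp add: sum.remove[of A a])
  moreover have "sum g A = g a + sum g (A - {a})"
    using assms by (simp add: sum.remove[of A a])
  moreover have "sum g' (A - {a}) = sum g (A - {a})"
    using assms by (intro sum.cong) auto
  ultimately show ?thesis by (simp add: algebra_simps)
qed

lemma pv_eq_iff: "e \<ge> 2 \<Longrightarrow> i \<in> {1..e} \<Longrightarrow> r \<in> {1..e} \<Longrightarrow> (pv e r = i) = (r = nx e i)"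
  by (auto simp: pv_def nx_def)

lemma yv_srefl:
  assumes e: "e \<ge> 2" and i: "i \<in> {1..e}" and r: "r \<in> {1..e}"
  shows "yv e Lam (srefl e Lam i b) r = yv e Lam b r
     - (if r = i then pairing e Lam b i else 0) + (if r = nx e i then pairing e Lam b i else 0)"
  using pv_eq_iff[OF e i r] nx_neq[OF e i]
  by (auto simp: yv_def srefl_def)

lemma FF_srefl:
  assumes e: "e \<ge> 2" and i: "i \<in> {1..e}"
  shows "FF e Lam (srefl e Lam i b) = FF e Lam b"
proof -
  let ?p = "pairing e Lam b i"
  let ?b' = "srefl e Lam i b"
  have L: "LB e Lam ?b' = LB e Lam b + Lam i * ?p"
    unfolding LB_def using i
    by (subst sum_one_change[of "{1..e}" i]) (auto simp: srefl_def algebra_simps)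
  have pn: "pv e (nx e i) = i" using pv_nx[OF e i] .
  have Q: "QQ e ?b' = QQ e b + ((b i + ?p - b (pv e i))^2 - (b i - b (pv e i))^2)
      + ((b (nx e i) - b i - ?p)^2 - (b (nx e i) - b i)^2)"
    unfolding QQ_def
    apply (subst sum_two_change[of "{1..e}" i "nx e i"])
    using i nx_in[OF e i] nx_neq[OF e i] pv_neq[OF e i] pn pv_eq_iff[OF e i]
    by (auto simp: srefl_def pn diff_diff_eq)
  show ?thesis unfolding FF_def L Q pairing_eq[OF e i]
    by (simp add: power2_eq_square algebra_simps)
qed

definition tau :: "nat \<Rightarrow> nat \<Rightarrow> nat \<Rightarrow> nat" where
  "tau e i r = (if r = i then nx e i else if r = nx e i then i else r)"

lemma yv_srefl_mod:
  assumes e: "e \<ge> 2" and i: "i \<in> {1..e}" and r: "r \<in> {1..e}"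
  shows "yv e Lam (srefl e Lam i b) r mod kk e Lam = yv e Lam b (tau e i r) mod kk e Lam"
proof (cases "i = e")
  case True
  have p: "pairing e Lam b i = kk e Lam + yv e Lam b e - yv e Lam b 1" using pairing_ye[OF e] True by simp
  have n: "nx e i = 1" using True by (simp add: nx_def)
  have "i \<noteq> 1" using True e by auto
  then show ?thesis using yv_srefl[OF e i r, of Lam b] p n True
    by (auto simp: tau_def)
next
  case False
  hence ie: "1 \<le> i" "i < e" using i by auto
  have p: "pairing e Lam b i = yv e Lam b i - yv e Lam b (i+1)" using pairing_y1[OF e ie] .
  have n: "nx e i = i + 1" using False by (simp add: nx_def)
  show ?thesis using yv_srefl[OF e i r, of Lam b] p n
    by (auto simp: tau_def)
qed

lemma tau_inj: "e \<ge> 2 \<Longrightarrow> i \<in> {1..e} \<Longrightarrow> inj_on (tau e i) {1..e}"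
  unfolding inj_on_def tau_def using nx_neq by auto

lemma tau_img: "e \<ge> 2 \<Longrightarrow> i \<in> {1..e} \<Longrightarrow> tau e i ` {1..e} = {1..e}"
proof -
  assume e: "e \<ge> 2" and i: "i \<in> {1..e}"
  have "tau e i ` {1..e} \<subseteq> {1..e}" using nx_in[OF e i] i by (auto simp: tau_def)
  moreover have "{1..e} \<subseteq> tau e i ` {1..e}"
  proof
    fix r assume r: "r \<in> {1..e}"
    have "tau e i (tau e i r) = r" using nx_neq[OF e i] by (auto simp: tau_def)
    moreover have "tau e i r \<in> {1..e}" using nx_in[OF e i] i r by (auto simp: tau_def)
    ultimately show "r \<in> tau e i ` {1..e}" by force
  qed
  ultimately show ?thesis by blast
qed

lemma res_srefl:
  assumes e: "e \<ge> 2" and i: "i \<in> {1..e}"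
  shows "res e Lam (srefl e Lam i b) = res e Lam b"
proof -
  let ?f = "\<lambda>r. yv e Lam b r mod kk e Lam"
  have "res e Lam (srefl e Lam i b) = image_mset (?f \<circ> tau e i) (mset_set {1..e})"
    unfolding res_def using yv_srefl_mod[OF e i] by (intro image_mset_cong) auto
  also have "... = image_mset ?f (image_mset (tau e i) (mset_set {1..e}))"
    by (simp add: multiset.map_comp)
  also have "image_mset (tau e i) (mset_set {1..e}) = mset_set {1..e}"
    using image_mset_mset_set[OF tau_inj[OF e i]] tau_img[OF e i] by simp
  finally show ?thesis unfolding res_def .
qed


lemma abs_le_sq: "\<bar>x::int\<bar> \<le> x^2"
proof (cases "x = 0")
  case False
  hence "\<bar>x\<bar> * 1 \<le> \<bar>x\<bar> * \<bar>x\<bar>" by (intro mult_left_mono) auto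
  thus ?thesis by (simp add: power2_eq_square abs_mult[symmetric])
qed simp

lemma telesc: fixes b :: "nat \<Rightarrow> int" and r :: nat shows "1 \<le> r \<Longrightarrow> \<bar>b r - b 1\<bar> \<le> (\<Sum>t\<in>{2..r}. \<bar>(b t - b (t - 1))::int\<bar>)"
proof (induction r rule: nat_induct_at_least)
  case base then show ?case by simp
next
  case (Suc n)
  have "{2..Suc n} = insert (Suc n) {2..n}" using Suc by auto
  hence "(\<Sum>t\<in>{2..Suc n}. \<bar>b t - b (t - 1)\<bar>) = \<bar>b (Suc n) - b n\<bar> + (\<Sum>t\<in>{2..n}. \<bar>b t - b (t - 1)\<bar>)"
    by simp
  then show ?case using Suc by linarith
qed

lemma diff_le_QQ:
  assumes e: "e \<ge> 2" and r: "r \<in> {1..e}"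
  shows "\<bar>b r - b 1\<bar> \<le> QQ e b"
proof -
  have "\<bar>b r - b 1\<bar> \<le> (\<Sum>t\<in>{2..r}. \<bar>b t - b (t - 1)\<bar>)" using telesc r by auto
  also have "... = (\<Sum>t\<in>{2..r}. \<bar>b t - b (pv e t)\<bar>)" by (intro sum.cong) (auto simp: pv_def)
  also have "... \<le> (\<Sum>t\<in>{1..e}. \<bar>b t - b (pv e t)\<bar>)" using r by (intro sum_mono2) auto
  also have "... \<le> QQ e b" unfolding QQ_def by (intro sum_mono abs_le_sq)
  finally show ?thesis .
qed

lemma QQ_nonneg: "QQ e b \<ge> 0" unfolding QQ_def by (intro sum_nonneg) auto

lemma lower_bound:
  assumes e: "e \<ge> 2" and Lam: "\<forall>i\<in>{1..e}. Lam i \<ge> 0" and k: "kk e Lam \<ge> 1"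
    and F: "FF e Lam b = FZ" and L: "LB e Lam b \<le> KZ" and r: "r \<in> {1..e}"
  shows "b r \<ge> - \<bar>FZ\<bar> - 2 * (2 * KZ - FZ)"
proof -
  have Q: "QQ e b = 2 * LB e Lam b - FZ" using F unfolding FF_def by simp
  have Qn: "QQ e b \<ge> 0" by (rule QQ_nonneg)
  have "\<exists>s\<in>{1..e}. b s \<ge> - \<bar>FZ\<bar>"
  proof (rule ccontr)
    assume "\<not> ?thesis"
    hence lt: "\<forall>s\<in>{1..e}. b s \<le> - \<bar>FZ\<bar> - 1" by auto
    have "LB e Lam b \<le> (\<Sum>s\<in>{1..e}. Lam s * (- \<bar>FZ\<bar> - 1))"
      unfolding LB_def using lt Lam by (intro sum_mono mult_left_mono) auto
    also have "... = kk e Lam * (- \<bar>FZ\<bar> - 1)" unfolding kk_def by (simp add: sum_distrib_right)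
    also have "... \<le> 1 * (- \<bar>FZ\<bar> - 1)" using k by (intro mult_right_mono_neg) auto
    finally have "LB e Lam b \<le> - \<bar>FZ\<bar> - 1" by simp
    then show False using Q Qn by arith
  qed
  then obtain s where s: "s \<in> {1..e}" "b s \<ge> - \<bar>FZ\<bar>" by blast
  have "\<bar>b r - b 1\<bar> \<le> QQ e b" "\<bar>b s - b 1\<bar> \<le> QQ e b" using diff_le_QQ[OF e] r s by auto
  then show ?thesis using s Q L by arith
qed

lemma upward:
  assumes e: "e \<ge> 2" and Lam: "\<forall>i\<in>{1..e}. Lam i \<ge> 0" and k: "kk e Lam \<ge> 1"
  shows "\<forall>b. nat ((\<Sum>r\<in>{1..e}. b r) + int e * (\<bar>FZ\<bar> + 2 * (2 * KZ - FZ))) = n \<longrightarrow>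
     FF e Lam b = FZ \<longrightarrow> LB e Lam b \<le> KZ \<longrightarrow> (\<forall>r. r \<notin> {1..e} \<longrightarrow> b r = 0) \<longrightarrow>
     (\<exists>b'. dominant e Lam b' \<and> FF e Lam b' = FZ \<and> res e Lam b' = res e Lam b \<and>
        (\<forall>r. r \<notin> {1..e} \<longrightarrow> b' r = 0) \<and> (\<forall>r\<in>{1..e}. b' r \<le> b r))"
proof (induction n rule: less_induct)
  case (less n)
  show ?case
  proof (intro allI impI)
    fix b
    assume n: "nat ((\<Sum>r\<in>{1..e}. b r) + int e * (\<bar>FZ\<bar> + 2 * (2 * KZ - FZ))) = n"
      and F: "FF e Lam b = FZ" and L: "LB e Lam b \<le> KZ" and z: "\<forall>r. r \<notin> {1..e} \<longrightarrow> b r = 0"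
    show "\<exists>b'. dominant e Lam b' \<and> FF e Lam b' = FZ \<and> res e Lam b' = res e Lam b \<and>
        (\<forall>r. r \<notin> {1..e} \<longrightarrow> b' r = 0) \<and> (\<forall>r\<in>{1..e}. b' r \<le> b r)"
    proof (cases "dominant e Lam b")
      case True
      then show ?thesis using F z by auto
    next
      case False
      then obtain i where i: "i \<in> {1..e}" and p: "pairing e Lam b i < 0"
        unfolding dominant_def by force
      define b1 where "b1 = srefl e Lam i b"
      have b1i: "b1 i = b i + pairing e Lam b i" unfolding b1_def srefl_def by simp
      have b1o: "\<And>r. r \<noteq> i \<Longrightarrow> b1 r = b r" unfolding b1_def srefl_def by simp
      have F1: "FF e Lam b1 = FZ" using FF_srefl[OF e i] F b1_def by simp
      have "LB e Lam b1 = LB e Lam b + Lam i * pairing e Lam b i"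
        unfolding LB_def using i b1i b1o
        by (subst sum_one_change[of "{1..e}" i]) (auto simp: algebra_simps)
      moreover have "Lam i * pairing e Lam b i \<le> 0" using Lam i p by (simp add: mult_nonneg_nonpos)
      ultimately have L1: "LB e Lam b1 \<le> KZ" using L by linarith
      have z1: "\<forall>r. r \<notin> {1..e} \<longrightarrow> b1 r = 0" using z b1o i by auto
      have S1: "(\<Sum>r\<in>{1..e}. b1 r) = (\<Sum>r\<in>{1..e}. b r) + pairing e Lam b i"
        using i b1i b1o by (subst sum_one_change[of "{1..e}" i]) auto
      have lb: "\<forall>r\<in>{1..e}. b1 r \<ge> - \<bar>FZ\<bar> - 2 * (2 * KZ - FZ)"
        using lower_bound[OF e Lam k F1 L1] by auto
      have "(\<Sum>r\<in>{1..e}. b1 r) \<ge> (\<Sum>r\<in>{1..e}. - \<bar>FZ\<bar> - 2 * (2 * KZ - FZ))"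
        using lb by (intro sum_mono) auto
      hence nn: "(\<Sum>r\<in>{1..e}. b1 r) + int e * (\<bar>FZ\<bar> + 2 * (2 * KZ - FZ)) \<ge> 0"
        by (simp add: algebra_simps)
      have lt: "nat ((\<Sum>r\<in>{1..e}. b1 r) + int e * (\<bar>FZ\<bar> + 2 * (2 * KZ - FZ))) < n"
        using n nn S1 p by linarith
      obtain b' where b': "dominant e Lam b'" "FF e Lam b' = FZ" "res e Lam b' = res e Lam b1"
        "\<forall>r. r \<notin> {1..e} \<longrightarrow> b' r = 0" "\<forall>r\<in>{1..e}. b' r \<le> b1 r"
        using less.IH[OF lt] F1 L1 z1 by blast
      have "res e Lam b1 = res e Lam b" using res_srefl[OF e i] b1_def by simp
      moreover have "\<forall>r\<in>{1..e}. b1 r \<le> b r" using b1i b1o p by (metis add_le_same_cancel1 less_le order_refl)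
      ultimately show ?thesis using b' by force
    qed
  qed
qed


lemma sorted_unique:
  fixes y y' :: "nat \<Rightarrow> int"
  assumes m1: "\<forall>i j. 1 \<le> i \<longrightarrow> i \<le> j \<longrightarrow> j \<le> e \<longrightarrow> y j \<le> y i"
    and m2: "\<forall>i j. 1 \<le> i \<longrightarrow> i \<le> j \<longrightarrow> j \<le> e \<longrightarrow> y' j \<le> y' i"
    and ms: "image_mset y (mset_set {1..e}) = image_mset y' (mset_set {1..e})"
    and r: "r \<in> {1..e}"
  shows "y r = y' r"
proof -
  define L where "L = map (\<lambda>r. - y r) [1..<e+1]"
  define L' where "L' = map (\<lambda>r. - y' r) [1..<e+1]"
  have s1: "sorted L" unfolding L_def sorted_iff_nth_mono using m1 by (auto simp del: upt_Suc)
  have s2: "sorted L'" unfolding L'_def sorted_iff_nth_mono using m2 by (auto simp del: upt_Suc)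
  have set: "{1..<e+1} = {1..e}" by auto
  have "mset L = image_mset uminus (image_mset y (mset_set {1..e}))"
    unfolding L_def by (simp add: multiset.map_comp o_def atLeastLessThanSuc_atLeastAtMost del: upt_Suc)
  moreover have "mset L' = image_mset uminus (image_mset y' (mset_set {1..e}))"
    unfolding L'_def by (simp add: multiset.map_comp o_def atLeastLessThanSuc_atLeastAtMost del: upt_Suc)
  ultimately have "mset L = mset L'" using ms by simp
  hence "sort L' = L" using properties_for_sort s1 by blast
  moreover have "sort L' = L'" using sorted_sort_id s2 by blast
  ultimately have "L = L'" by simp
  hence "L ! (r - 1) = L' ! (r - 1)" by simp
  moreover have n: "[1..<e+1] ! (r - 1) = r" using r by (subst nth_upt) auto
  moreover have "r - 1 < length [1..<e+1]" using r by auto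
  ultimately have "- y ([1..<e+1] ! (r - 1)) = - y' ([1..<e+1] ! (r - 1))"
    unfolding L_def L'_def by (metis nth_map)
  thus ?thesis using n by simp
qed

lemma div_cases_k:
  fixes x k :: int assumes k: "k > 0"
  shows "0 \<le> x \<Longrightarrow> x < k \<Longrightarrow> x div k = 0"
    and "x = k \<Longrightarrow> x div k = 1"
    and "-k \<le> x \<Longrightarrow> x < 0 \<Longrightarrow> x div k = -1"
    and "x < k \<Longrightarrow> x div k \<le> 0"
    and "0 \<le> x \<Longrightarrow> x div k \<ge> 0"
proof -
  show "0 \<le> x \<Longrightarrow> x < k \<Longrightarrow> x div k = 0" by simp
  show "x = k \<Longrightarrow> x div k = 1" using k by simp
  show "-k \<le> x \<Longrightarrow> x < 0 \<Longrightarrow> x div k = -1"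
  proof -
    assume a: "-k \<le> x" "x < 0"
    have "(x + k) div k = x div k + 1" using k by (simp add: div_add_self2)
    moreover have "(x + k) div k = 0" using a by simp
    ultimately show ?thesis by simp
  qed
  show "x < k \<Longrightarrow> x div k \<le> 0"
  proof -
    assume "x < k"
    hence "x div k \<le> (k - 1) div k" using k by (intro zdiv_mono1) auto
    also have "(k - 1) div k = 0" using k by simp
    finally show ?thesis .
  qed
  show "0 \<le> x \<Longrightarrow> x div k \<ge> 0" using k by (simp add: pos_imp_zdiv_nonneg_iff)
qed

lemma mono_bounds:
  fixes y :: "nat \<Rightarrow> int"
  assumes m1: "\<forall>i j. 1 \<le> i \<longrightarrow> i \<le> j \<longrightarrow> j \<le> e \<longrightarrow> y j \<le> y i"
    and sp: "y 1 - y e \<le> k" and r: "r \<in> {1..e}"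
  shows "y e \<le> y r" "y r \<le> y e + k"
proof -
  show "y e \<le> y r" using m1 r by auto
  have "y r \<le> y 1" using m1 r by auto
  thus "y r \<le> y e + k" using sp by simp
qed

lemma image_mset_split:
  assumes "finite A" "T \<subseteq> A"
  shows "image_mset f (mset_set A) = image_mset f (mset_set T) + image_mset f (mset_set (A - T))"
proof -
  have "A = T \<union> (A - T)" using assms by auto
  hence "mset_set A = mset_set T + mset_set (A - T)"
    using assms by (metis Diff_disjoint finite_Diff finite_subset mset_set_Union)
  thus ?thesis by simp
qed

lemma image_mset_constant:
  assumes "finite T" "\<And>r. r \<in> T \<Longrightarrow> f r = c"
  shows "image_mset f (mset_set T) = replicate_mset (card T) c"
proof -
  have "image_mset f (mset_set T) = image_mset (\<lambda>_. c) (mset_set T)"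
    using assms by (intro image_mset_cong) auto
  thus ?thesis using assms by (simp add: image_mset_const_eq)
qed

lemma comb:
  fixes y y' :: "nat \<Rightarrow> int" and k :: int
  assumes k: "k > 0" and e: "e \<ge> 1"
    and m1: "\<forall>i j. 1 \<le> i \<longrightarrow> i \<le> j \<longrightarrow> j \<le> e \<longrightarrow> y j \<le> y i"
    and m2: "\<forall>i j. 1 \<le> i \<longrightarrow> i \<le> j \<longrightarrow> j \<le> e \<longrightarrow> y' j \<le> y' i"
    and sp1: "y 1 - y e \<le> k" and sp2: "y' 1 - y' e \<le> k"
    and rs: "image_mset (\<lambda>r. y r mod k) (mset_set {1..e}) = image_mset (\<lambda>r. y' r mod k) (mset_set {1..e})"
    and sm: "sum y {1..e} = sum y' {1..e}"
    and le: "y e \<le> y' e"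
  shows "image_mset y (mset_set {1..e}) = image_mset y' (mset_set {1..e})"
proof -
  let ?A = "{1..e}"
  define s where "s = y e"
  define s' where "s' = y' e"
  have eA: "e \<in> ?A" using e by auto
  have b1: "\<And>r. r \<in> ?A \<Longrightarrow> s \<le> y r \<and> y r \<le> s + k"
    using mono_bounds[OF m1 sp1] s_def by auto
  have b2: "\<And>r. r \<in> ?A \<Longrightarrow> s' \<le> y' r \<and> y' r \<le> s' + k"
    using mono_bounds[OF m2 sp2] s'_def by auto
  show ?thesis
  proof (cases "s' \<ge> s + k")
    case True
    have "\<And>r. r \<in> ?A \<Longrightarrow> y r \<le> y' r" using b1 b2 True by force
    hence "\<And>r. r \<in> ?A \<Longrightarrow> y r = y' r" using sum_mono_inv[OF sm] by blast
    thus ?thesis by (intro image_mset_cong) auto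
  next
    case False
    hence ss: "s' < s + k" by simp
    have ss2: "s \<le> s'" using le s_def s'_def by simp
    define R where "R = (\<lambda>\<rho>. s' + (\<rho> - s') mod k)"
    define w where "w = (\<lambda>r. s' + (y r - s') mod k)"
    define w' where "w' = (\<lambda>r. s' + (y' r - s') mod k)"
    define d where "d = (\<lambda>r. (y r - s') div k)"
    define d' where "d' = (\<lambda>r. (y' r - s') div k)"
    have yd: "\<And>r. y r = w r + k * d r" unfolding w_def d_def
      by (metis add.commute add.left_commute diff_add_cancel mult_div_mod_eq)
    have yd': "\<And>r. y' r = w' r + k * d' r" unfolding w'_def d'_def
      by (metis add.commute add.left_commute diff_add_cancel mult_div_mod_eq)
    have wR: "w = (\<lambda>r. R (y r mod k))" unfolding w_def R_def by (simp add: mod_diff_left_eq)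
    have wR': "w' = (\<lambda>r. R (y' r mod k))" unfolding w'_def R_def by (simp add: mod_diff_left_eq)
    have imw: "image_mset w (mset_set ?A) = image_mset w' (mset_set ?A)"
    proof -
      have "image_mset w (mset_set ?A) = image_mset R (image_mset (\<lambda>r. y r mod k) (mset_set ?A))"
        unfolding wR by (simp add: multiset.map_comp o_def)
      also have "... = image_mset R (image_mset (\<lambda>r. y' r mod k) (mset_set ?A))" using rs by simp
      also have "... = image_mset w' (mset_set ?A)"
        unfolding wR' by (simp add: multiset.map_comp o_def)
      finally show ?thesis .
    qed
    have sw: "sum w ?A = sum w' ?A"
      using imw by (simp add: sum_unfold_sum_mset)
    have "sum y ?A = sum w ?A + k * sum d ?A"
      using yd by (simp add: sum.distrib sum_distrib_left)
    moreover have "sum y' ?A = sum w' ?A + k * sum d' ?A"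
      using yd' by (simp add: sum.distrib sum_distrib_left)
    ultimately have "k * sum d ?A = k * sum d' ?A" using sm sw by simp
    hence sd: "sum d ?A = sum d' ?A" using k by simp
    have d'nn: "\<And>r. r \<in> ?A \<Longrightarrow> d' r \<ge> 0" unfolding d'_def using b2 div_cases_k(5)[OF k] by simp
    show ?thesis
    proof (cases "s < s'")
      case True
      have dle: "\<And>r. r \<in> ?A \<Longrightarrow> d r \<le> 0"
      proof -
        fix r assume r: "r \<in> ?A"
        have "y r - s' < k" using b1[OF r] True by linarith
        thus "d r \<le> 0" unfolding d_def using div_cases_k(4)[OF k] by blast
      qed
      have de: "d e = -1" unfolding d_def using True ss2 ss s_def div_cases_k(3)[OF k] by simp
      have "sum d ?A = d e + sum d (?A - {e})" using eA by (simp add: sum.remove)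
      also have "sum d (?A - {e}) \<le> 0" using dle by (intro sum_nonpos) auto
      finally have "sum d ?A < 0" using de by simp
      moreover have "sum d' ?A \<ge> 0" using d'nn by (intro sum_nonneg) auto
      ultimately show ?thesis using sd by simp
    next
      case False
      hence seq: "s' = s" using ss2 by simp
      define T where "T = {r \<in> ?A. y r = s + k}"
      define T' where "T' = {r \<in> ?A. y' r = s + k}"
      have dT: "\<And>r. r \<in> ?A \<Longrightarrow> d r = (if r \<in> T then 1 else 0)"
      proof -
        fix r assume r: "r \<in> ?A"
        show "d r = (if r \<in> T then 1 else 0)"
        proof (cases "y r = s + k")
          case True thus ?thesis unfolding d_def T_def using seq r k by simp
        next
          case False thus ?thesis unfolding d_def T_def using seq r b1[OF r] div_cases_k(1)[OF k] by simp
        qed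
      qed
      have dT': "\<And>r. r \<in> ?A \<Longrightarrow> d' r = (if r \<in> T' then 1 else 0)"
      proof -
        fix r assume r: "r \<in> ?A"
        show "d' r = (if r \<in> T' then 1 else 0)"
        proof (cases "y' r = s + k")
          case True thus ?thesis unfolding d'_def T'_def using seq r k by simp
        next
          case False thus ?thesis unfolding d'_def T'_def using seq r b2[OF r] div_cases_k(1)[OF k] by simp
        qed
      qed
      have TA: "T \<subseteq> ?A" "T' \<subseteq> ?A" unfolding T_def T'_def by auto
      have "sum d ?A = (\<Sum>r\<in>?A. if r \<in> T then 1 else 0)" using dT by (intro sum.cong) auto
      also have "... = int (card T)" using TA by (simp add: sum.If_cases Int_absorb1)
      finally have cT: "sum d ?A = int (card T)" .
      have "sum d' ?A = (\<Sum>r\<in>?A. if r \<in> T' then 1 else 0)" using dT' by (intro sum.cong) auto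
      also have "... = int (card T')" using TA by (simp add: sum.If_cases Int_absorb1)
      finally have cT': "sum d' ?A = int (card T')" .
      have cc: "card T = card T'" using cT cT' sd by simp
      have fT: "finite T" "finite T'" using TA finite_subset by auto
      have wy: "\<And>r. r \<in> ?A - T \<Longrightarrow> w r = y r" using yd dT by simp
      have wy': "\<And>r. r \<in> ?A - T' \<Longrightarrow> w' r = y' r" using yd' dT' by simp
      have wT: "\<And>r. r \<in> T \<Longrightarrow> w r = s" unfolding w_def T_def using seq by simp
      have wT': "\<And>r. r \<in> T' \<Longrightarrow> w' r = s" unfolding w'_def T'_def using seq by simp
      have yT: "\<And>r. r \<in> T \<Longrightarrow> y r = s + k" unfolding T_def by simp
      have yT': "\<And>r. r \<in> T' \<Longrightarrow> y' r = s + k" unfolding T'_def by simp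
      have "image_mset y (mset_set ?A) + replicate_mset (card T) s
          = replicate_mset (card T) (s + k) + image_mset y (mset_set (?A - T)) + replicate_mset (card T) s"
        using image_mset_split[OF _ TA(1), of y] image_mset_constant[OF fT(1) yT] by simp
      also have "... = replicate_mset (card T) (s + k) + image_mset w (mset_set ?A)"
        using image_mset_split[OF _ TA(1), of w] image_mset_constant[OF fT(1) wT]
          image_mset_cong[of "mset_set (?A - T)" w y] wy by (simp add: add_ac)
      finally have E1: "image_mset y (mset_set ?A) + replicate_mset (card T) s
          = replicate_mset (card T) (s + k) + image_mset w (mset_set ?A)" .
      have "image_mset y' (mset_set ?A) + replicate_mset (card T') s
          = replicate_mset (card T') (s + k) + image_mset y' (mset_set (?A - T')) + replicate_mset (card T') s"
        using image_mset_split[OF _ TA(2), of y'] image_mset_constant[OF fT(2) yT'] by simp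
      also have "... = replicate_mset (card T') (s + k) + image_mset w' (mset_set ?A)"
        using image_mset_split[OF _ TA(2), of w'] image_mset_constant[OF fT(2) wT']
          image_mset_cong[of "mset_set (?A - T')" w' y'] wy' by (simp add: add_ac)
      finally have E2: "image_mset y' (mset_set ?A) + replicate_mset (card T') s
          = replicate_mset (card T') (s + k) + image_mset w' (mset_set ?A)" .
      from E1 E2 imw cc have "image_mset y (mset_set ?A) + replicate_mset (card T') s
         = image_mset y' (mset_set ?A) + replicate_mset (card T') s" by simp
      thus ?thesis by (metis add_right_cancel)
    qed
  qed
qed


lemma bij_nx: "e \<ge> 2 \<Longrightarrow> bij_betw (nx e) {1..e} {1..e}"
  apply (rule bij_betw_byWitness[where f'="pv e"])
  using pv_nx nx_pv pv_in nx_in by auto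

lemma sum_nx: "e \<ge> 2 \<Longrightarrow> (\<Sum>r\<in>{1..e}. f (nx e r)) = (\<Sum>r\<in>{1..e}. f r)"
  using sum.reindex_bij_betw[OF bij_nx, of e f] by simp

lemma dom_y:
  assumes e: "e \<ge> 2" and d: "dominant e Lam b"
  shows "\<forall>i j. 1 \<le> i \<longrightarrow> i \<le> j \<longrightarrow> j \<le> e \<longrightarrow> yv e Lam b j \<le> yv e Lam b i"
    and "yv e Lam b 1 - yv e Lam b e \<le> kk e Lam"
proof -
  have adj: "\<And>i. 1 \<le> i \<Longrightarrow> i < e \<Longrightarrow> yv e Lam b (i+1) \<le> yv e Lam b i"
  proof -
    fix i assume i: "1 \<le> i" "i < e"
    have "pairing e Lam b i \<ge> 0" using d i unfolding dominant_def by auto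
    thus "yv e Lam b (i+1) \<le> yv e Lam b i" using pairing_y1[OF e i] by simp
  qed
  have "\<And>j. i \<le> j \<Longrightarrow> 1 \<le> i \<Longrightarrow> j \<le> e \<Longrightarrow> yv e Lam b j \<le> yv e Lam b i" for i
  proof -
    fix j show "i \<le> j \<Longrightarrow> 1 \<le> i \<Longrightarrow> j \<le> e \<Longrightarrow> yv e Lam b j \<le> yv e Lam b i"
    proof (induction j rule: dec_induct)
      case base then show ?case by simp
    next
      case (step n)
      then show ?case using adj[of n] by simp
    qed
  qed
  thus "\<forall>i j. 1 \<le> i \<longrightarrow> i \<le> j \<longrightarrow> j \<le> e \<longrightarrow> yv e Lam b j \<le> yv e Lam b i" by blast
  have "pairing e Lam b e \<ge> 0" using d e unfolding dominant_def by auto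
  thus "yv e Lam b 1 - yv e Lam b e \<le> kk e Lam" using pairing_ye[OF e] by simp
qed

lemma sum_yv: "e \<ge> 2 \<Longrightarrow> sum (yv e Lam b) {1..e} = sum (PP e Lam) {1..e}"
  unfolding yv_def using sum_pv[of e b] by (simp add: sum.distrib sum_subtractf)

lemma lemmaB:
  assumes e: "e \<ge> 2" and k: "kk e Lam > 0"
    and d1: "dominant e Lam b1" and d2: "dominant e Lam b2"
    and F: "FF e Lam b1 = FF e Lam b2" and R: "res e Lam b1 = res e Lam b2"
  shows "\<forall>r\<in>{1..e}. b1 r = b2 r"
proof -
  let ?y1 = "yv e Lam b1" and ?y2 = "yv e Lam b2" and ?A = "{1..e}"
  have e1: "e \<ge> 1" using e by simp
  have sm: "sum ?y1 ?A = sum ?y2 ?A" using sum_yv[OF e] by simp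
  have rs: "image_mset (\<lambda>r. ?y1 r mod kk e Lam) (mset_set ?A) = image_mset (\<lambda>r. ?y2 r mod kk e Lam) (mset_set ?A)"
    using R unfolding res_def .
  have im: "image_mset ?y1 (mset_set ?A) = image_mset ?y2 (mset_set ?A)"
  proof (cases "?y1 e \<le> ?y2 e")
    case True
    show ?thesis by (rule comb[OF k e1 dom_y(1)[OF e d1] dom_y(1)[OF e d2] dom_y(2)[OF e d1] dom_y(2)[OF e d2] rs sm True])
  next
    case False
    show ?thesis using comb[OF k e1 dom_y(1)[OF e d2] dom_y(1)[OF e d1] dom_y(2)[OF e d2] dom_y(2)[OF e d1] rs[symmetric] sm[symmetric]] False
      by simp
  qed
  have yy: "\<And>r. r \<in> ?A \<Longrightarrow> ?y1 r = ?y2 r"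
    using sorted_unique[OF dom_y(1)[OF e d1] dom_y(1)[OF e d2] im] by blast
  define c where "c = (\<lambda>r. b1 r - b2 r)"
  have cp: "\<And>r. r \<in> ?A \<Longrightarrow> c r = c (pv e r)" using yy unfolding yv_def c_def by force
  have cc: "\<And>r. 1 \<le> r \<Longrightarrow> r \<le> e \<Longrightarrow> c r = c 1"
  proof -
    fix r :: nat show "1 \<le> r \<Longrightarrow> r \<le> e \<Longrightarrow> c r = c 1"
    proof (induction r rule: nat_induct_at_least)
      case base then show ?case by simp
    next
      case (Suc n)
      have "c (Suc n) = c (pv e (Suc n))" using cp Suc by simp
      also have "pv e (Suc n) = n" using Suc by (simp add: pv_def)
      finally show ?case using Suc by simp
    qed
  qed
  have dd: "\<And>r. r \<in> ?A \<Longrightarrow> b1 r - b1 (pv e r) = b2 r - b2 (pv e r)"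
    using cp unfolding c_def by (simp add: algebra_simps)
  have QQe: "QQ e b1 = QQ e b2" unfolding QQ_def using dd by (intro sum.cong) auto
  hence "LB e Lam b1 = LB e Lam b2" using F unfolding FF_def by simp
  moreover have "LB e Lam b1 = LB e Lam b2 + c 1 * kk e Lam"
  proof -
    have bb: "\<And>r. r \<in> ?A \<Longrightarrow> b1 r = b2 r + c 1" using cc unfolding c_def
      by (metis atLeastAtMost_iff diff_add_cancel add.commute)
    have "LB e Lam b1 = (\<Sum>r\<in>?A. Lam r * b2 r + Lam r * c 1)"
      unfolding LB_def using bb by (intro sum.cong) (auto simp: algebra_simps)
    also have "... = LB e Lam b2 + c 1 * kk e Lam"
      unfolding LB_def kk_def by (simp add: sum.distrib sum_distrib_left sum_distrib_right mult.commute)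
    finally show ?thesis .
  qed
  ultimately have "c 1 = 0" using k by simp
  thus ?thesis using cc unfolding c_def by auto
qed

lemma Vsupp_zero: "b \<in> Vsupp e Lam \<Longrightarrow> \<forall>r. r \<notin> {1..e} \<longrightarrow> b r = 0"
  by (induction rule: Vsupp.induct) (auto simp: srefl_def)

lemma Vsupp_k0:
  assumes e: "e \<ge> 2" and k: "kk e Lam = 0" and Lam: "\<forall>i\<in>{1..e}. Lam i \<ge> 0"
    and b: "b \<in> Vsupp e Lam"
  shows "(\<forall>r\<in>{1..e}. b r \<ge> 0) \<and> dominant e Lam b"
  using b
proof (induction rule: Vsupp.induct)
  case (base b) then show ?case by auto
next
  case (refl b i)
  have sp: "(\<Sum>j\<in>{1..e}. pairing e Lam b j) = kk e Lam"
  proof -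
    have "(\<Sum>j\<in>{1..e}. pairing e Lam b j) = (\<Sum>j\<in>{1..e}. Lam j - 2 * b j + b (pv e j) + b (nx e j))"
      using pairing_eq[OF e] by (intro sum.cong) auto
    also have "... = kk e Lam"
      unfolding kk_def using sum_pv[OF e, of b] sum_nx[OF e, of b]
      by (simp add: sum.distrib sum_subtractf sum_distrib_left)
    finally show ?thesis .
  qed
  have nn: "\<forall>j\<in>{1..e}. pairing e Lam b j \<ge> 0" using refl.IH unfolding dominant_def by auto
  have "\<forall>j\<in>{1..e}. pairing e Lam b j = 0"
    using sum_nonneg_eq_0_iff[of "{1..e}" "pairing e Lam b"] nn sp k by auto
  hence "srefl e Lam i b = b" using refl.hyps(2) unfolding srefl_def by simp
  then show ?case using refl.IH by simp
qed

lemma Vsupp_kpos: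
  assumes e: "e \<ge> 2"
    and b: "b \<in> Vsupp e Lam"
  shows "\<exists>\<mu>. dominant e Lam \<mu> \<and> (\<forall>r\<in>{1..e}. \<mu> r \<ge> 0) \<and> FF e Lam \<mu> = FF e Lam b \<and> res e Lam \<mu> = res e Lam b"
  using b
proof (induction rule: Vsupp.induct)
  case (base b) then show ?case by auto
next
  case (refl b i)
  then show ?case using FF_srefl[OF e refl.hyps(2)] res_srefl[OF e refl.hyps(2)] by metis
qed

lemma Vsupp_nonneg:
  assumes e: "e \<ge> 2" and Lam: "\<forall>i\<in>{1..e}. Lam i \<ge> 0" and b: "b \<in> Vsupp e Lam"
  shows "\<forall>r\<in>{1..e}. b r \<ge> 0"
proof (cases "kk e Lam = 0")
  case True
  then show ?thesis using Vsupp_k0[OF e True Lam b] by simp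
next
  case False
  have "kk e Lam \<ge> 0" unfolding kk_def using Lam by (intro sum_nonneg) auto
  hence k: "kk e Lam \<ge> 1" using False by simp
  obtain \<mu> where mu: "dominant e Lam \<mu>" "\<forall>r\<in>{1..e}. \<mu> r \<ge> 0" "FF e Lam \<mu> = FF e Lam b" "res e Lam \<mu> = res e Lam b"
    using Vsupp_kpos[OF e b] by blast
  obtain b' where b': "dominant e Lam b'" "FF e Lam b' = FF e Lam b" "res e Lam b' = res e Lam b"
     "\<forall>r\<in>{1..e}. b' r \<le> b r"
    using upward[OF e Lam k, rule_format, where b=b and FZ="FF e Lam b" and KZ="LB e Lam b", OF HOL.refl] Vsupp_zero[OF b] by auto
  have "\<forall>r\<in>{1..e}. b' r = \<mu> r" using lemmaB[OF e _ b'(1) mu(1)] k b'(2,3) mu(3,4) by simp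
  then show ?thesis using b'(4) mu(2) by force
qed


lemma bij_lt:
  assumes "i < j"
  shows "x \<le> bij e b i j \<longleftrightarrow> (\<forall>r\<in>{i..j-1}. x \<le> b r - 1) \<and> (\<forall>r\<in>{1..e} - {i..j-1}. x \<le> b r)"
proof -
  have ne: "(\<lambda>r. b r - 1) ` {i..j-1} \<union> b ` ({1..e} - {i..j-1}) \<noteq> {}" using assms by auto
  have "x \<le> bij e b i j \<longleftrightarrow> (\<forall>a\<in>(\<lambda>r. b r - 1) ` {i..j-1} \<union> b ` ({1..e} - {i..j-1}). x \<le> a)"
    unfolding bij_def using assms by (simp only: if_True if_False) (intro Min_ge_iff ne; auto)
  thus ?thesis by (simp only: ball_Un ball_simps image_iff)
qed

lemma bij_gt:
  assumes "\<not> i < j" "i \<noteq> j"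
  shows "x \<le> bij e b i j \<longleftrightarrow> (\<forall>r\<in>{j..i-1}. x \<le> b r + 1) \<and> (\<forall>r\<in>{1..e} - {j..i-1}. x \<le> b r)"
proof -
  have ne: "(\<lambda>r. b r + 1) ` {j..i-1} \<union> b ` ({1..e} - {j..i-1}) \<noteq> {}" using assms by auto
  have "x \<le> bij e b i j \<longleftrightarrow> (\<forall>a\<in>(\<lambda>r. b r + 1) ` {j..i-1} \<union> b ` ({1..e} - {j..i-1}). x \<le> a)"
    unfolding bij_def using assms by (simp only: if_True if_False) (intro Min_ge_iff ne; auto)
  thus ?thesis by (simp only: ball_Un ball_simps image_iff)
qed


lemma shift_bound:
  assumes i: "i \<in> {1..e}" and j: "j \<in> {1..e}" and ij: "i \<noteq> j"
  shows "(\<forall>r\<in>{1..e}. shift e b i j n r \<ge> 0) \<longleftrightarrow> n \<le> bij e b i j"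
proof (cases "i < j")
  case True
  have sh1: "\<And>r. r \<in> {i..j-1} \<Longrightarrow> shift e b i j n r = b r - n - 1"
    unfolding shift_def root_coeff_def using True i j by auto
  have sh2: "\<And>r. r \<in> {1..e} - {i..j-1} \<Longrightarrow> shift e b i j n r = b r - n"
    unfolding shift_def root_coeff_def using True by auto
  have sub: "{i..j-1} \<subseteq> {1..e}" using i j True by auto
  have "(\<forall>r\<in>{1..e}. shift e b i j n r \<ge> 0) \<longleftrightarrow>
     (\<forall>r\<in>{i..j-1}. shift e b i j n r \<ge> 0) \<and> (\<forall>r\<in>{1..e} - {i..j-1}. shift e b i j n r \<ge> 0)"
    using sub by blast
  also have "... \<longleftrightarrow> (\<forall>r\<in>{i..j-1}. n \<le> b r - 1) \<and> (\<forall>r\<in>{1..e} - {i..j-1}. n \<le> b r)"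
    using sh1 sh2 by simp
  finally show ?thesis using bij_lt[OF True] by simp
next
  case False
  have sh1: "\<And>r. r \<in> {j..i-1} \<Longrightarrow> shift e b i j n r = b r - n + 1"
    unfolding shift_def root_coeff_def using False i j by auto
  have sh2: "\<And>r. r \<in> {1..e} - {j..i-1} \<Longrightarrow> shift e b i j n r = b r - n"
    unfolding shift_def root_coeff_def using False by auto
  have sub: "{j..i-1} \<subseteq> {1..e}" using i j False by auto
  have "(\<forall>r\<in>{1..e}. shift e b i j n r \<ge> 0) \<longleftrightarrow>
     (\<forall>r\<in>{j..i-1}. shift e b i j n r \<ge> 0) \<and> (\<forall>r\<in>{1..e} - {j..i-1}. shift e b i j n r \<ge> 0)"
    using sub by blast
  also have "... \<longleftrightarrow> (\<forall>r\<in>{j..i-1}. n \<le> b r + 1) \<and> (\<forall>r\<in>{1..e} - {j..i-1}. n \<le> b r)"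
  proof -
    have eq: "\<And>r. (0 \<le> b r - n + 1) = (n \<le> b r + 1)" by arith
    show ?thesis using sh1 sh2 by (simp add: eq)
  qed
  finally show ?thesis using bij_gt[OF False ij] by simp
qed

lemma default_le:
  assumes i: "i \<in> {1..e}" and j: "j \<in> {1..e}" and ij: "i \<noteq> j" and b: "\<forall>r\<in>{1..e}. b r \<ge> 0"
  shows "(if i < j then -1 else 0) \<le> bij e b i j"
proof (cases "i < j")
  case True
  have sub: "{i..j-1} \<subseteq> {1..e}" using i j True by auto
  have "(\<forall>r\<in>{i..j-1}. -1 \<le> b r - 1) \<and> (\<forall>r\<in>{1..e} - {i..j-1}. -1 \<le> b r)"
    using b sub by fastforce
  thus ?thesis using bij_lt[OF True] True by simp
next
  case False
  have sub: "{j..i-1} \<subseteq> {1..e}" using i j False by auto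
  have "(\<forall>r\<in>{j..i-1}. 0 \<le> b r + 1) \<and> (\<forall>r\<in>{1..e} - {j..i-1}. 0 \<le> b r)"
    using b sub by fastforce
  thus ?thesis using bij_gt[OF False ij] False by simp
qed

theorem corollary4p5:
  fixes e :: nat and Lam :: "nat \<Rightarrow> int" and S :: "(nat \<Rightarrow> int) set" and b :: "nat \<Rightarrow> int"
  assumes "e \<ge> 2"
    and "\<forall>i\<in>{1..e}. Lam i \<ge> 0"
    and "S = Vsupp e Lam"
    and "b \<in> S"
    and "dominant e Lam b"
  shows "(\<forall>i\<in>{1..e}. \<forall>j\<in>{1..e}. i \<noteq> j \<longrightarrow> kplus S e b i j \<le> bij e b i j)
       \<and> ((\<forall>i j n. pos_real_root e i j n \<longrightarrow> dominant e Lam (shift e b i j n)) \<longrightarrow>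
           (\<forall>i\<in>{1..e}. \<forall>j\<in>{1..e}. i \<noteq> j \<longrightarrow> kplus S e b i j = bij e b i j))"
proof -
  have e: "e \<ge> 2" and Lam: "\<forall>i\<in>{1..e}. Lam i \<ge> 0" and S: "S = Vsupp e Lam" and bS: "b \<in> S"
    using assms by auto
  have bnn: "\<forall>r\<in>{1..e}. b r \<ge> 0" using Vsupp_nonneg[OF e Lam] bS S by simp
  have bz: "\<forall>r. r \<notin> {1..e} \<longrightarrow> b r = 0" using Vsupp_zero bS S by simp
  define N where "N = (\<lambda>i j. {n. pos_real_root e i j n \<and> shift e b i j n \<in> S})"
  have kp: "\<And>i j. kplus S e b i j = Max ({if i < j then -1 else 0} \<union> N i j)"
    unfolding kplus_def N_def by simp
  have Nle: "\<And>i j n. i \<in> {1..e} \<Longrightarrow> j \<in> {1..e} \<Longrightarrow> i \<noteq> j \<Longrightarrow> n \<in> N i j \<Longrightarrow> n \<le> bij e b i j"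
  proof -
    fix i j n assume i: "i \<in> {1..e}" and j: "j \<in> {1..e}" and ij: "i \<noteq> j" and n: "n \<in> N i j"
    have "shift e b i j n \<in> Vsupp e Lam" using n S unfolding N_def by simp
    hence "\<forall>r\<in>{1..e}. shift e b i j n r \<ge> 0" using Vsupp_nonneg[OF e Lam] by simp
    thus "n \<le> bij e b i j" using shift_bound[OF i j ij] by simp
  qed
  have fin: "\<And>i j. i \<in> {1..e} \<Longrightarrow> j \<in> {1..e} \<Longrightarrow> i \<noteq> j \<Longrightarrow> finite ({if i < j then -1 else 0} \<union> N i j)"
  proof -
    fix i j assume i: "i \<in> {1..e}" and j: "j \<in> {1..e}" and ij: "i \<noteq> j"
    have "N i j \<subseteq> {0..bij e b i j}"
    proof
      fix n assume n: "n \<in> N i j"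
      have "n \<ge> 0" using n unfolding N_def pos_real_root_def by (auto split: if_splits)
      thus "n \<in> {0..bij e b i j}" using Nle[OF i j ij n] by simp
    qed
    thus "finite ({if i < j then -1 else 0} \<union> N i j)" using finite_subset by auto
  qed
  have ub: "\<And>i j. i \<in> {1..e} \<Longrightarrow> j \<in> {1..e} \<Longrightarrow> i \<noteq> j \<Longrightarrow>
      \<forall>x\<in>{if i < j then -1 else 0} \<union> N i j. x \<le> bij e b i j"
    using Nle default_le bnn by blast
  have part1: "\<forall>i\<in>{1..e}. \<forall>j\<in>{1..e}. i \<noteq> j \<longrightarrow> kplus S e b i j \<le> bij e b i j"
  proof (intro ballI impI)
    fix i j assume i: "i \<in> {1..e}" and j: "j \<in> {1..e}" and ij: "i \<noteq> j"
    show "kplus S e b i j \<le> bij e b i j" unfolding kp using ub[OF i j ij] fin[OF i j ij]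
      by (subst Max_le_iff) auto
  qed
  have part2: "(\<forall>i j n. pos_real_root e i j n \<longrightarrow> dominant e Lam (shift e b i j n)) \<longrightarrow>
           (\<forall>i\<in>{1..e}. \<forall>j\<in>{1..e}. i \<noteq> j \<longrightarrow> kplus S e b i j = bij e b i j)"
  proof (intro impI ballI)
    assume H: "\<forall>i j n. pos_real_root e i j n \<longrightarrow> dominant e Lam (shift e b i j n)"
    fix i j assume i: "i \<in> {1..e}" and j: "j \<in> {1..e}" and ij: "i \<noteq> j"
    let ?m = "bij e b i j"
    have mem: "?m \<in> {if i < j then -1 else 0} \<union> N i j"
    proof (cases "pos_real_root e i j ?m")
      case True
      have sh: "\<forall>r\<in>{1..e}. shift e b i j ?m r \<ge> 0" using shift_bound[OF i j ij] by simp
      have shz: "\<forall>r. r \<notin> {1..e} \<longrightarrow> shift e b i j ?m r = 0"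
        using bz unfolding shift_def root_coeff_def by simp
      have "shift e b i j ?m \<in> Vsupp e Lam"
        using Vsupp.base[OF sh shz] H True by blast
      then show ?thesis using True S unfolding N_def by simp
    next
      case False
      hence "(if i < j then ?m < 0 else ?m < 1)" using i j ij unfolding pos_real_root_def by auto
      moreover have "(if i < j then -1 else 0) \<le> ?m" using default_le[OF i j ij bnn] .
      ultimately have "?m = (if i < j then -1 else 0)" by (auto split: if_splits)
      then show ?thesis by simp
    qed
    show "kplus S e b i j = bij e b i j" unfolding kp
      using Max_eqI[OF fin[OF i j ij] _ mem] ub[OF i j ij] by blast
  qed
  show ?thesis using part1 part2 by blast
qed


end
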